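(* Let $\eta\in(0,1)$, $T\ge 1$, and let $\ell_1,\dots,\ell_T\in[-1,1]^K$ be an arbitrary loss sequence fixed in advance. Then LB-Prod (defined in the context) produces, at every round $t$, a probability vector $\pi_t$ in the simplex with all entries strictly positive, and for every $i^*\in[K]$, $$\sum_{t=1}^T\mathbb{E}\big[\ell_{t,A_t}-\ell_{t,i^*}\big]\le 2+\frac{K\log T}{\eta}+\frac{2\eta T}{1-\eta}.$$
   Context: Bandit setting: in each round $t$ the learner picks $A_t\in[K]$ and observes only $\ell_{t,A_t}$; expectations are over the learner's randomness. LB-Prod with parameter $\eta\in(0,1)$: set $\pi_{1,i}=1/K$. In round $t$: draw $A_t\sim\pi_t$, observe $\ell_{t,A_t}$; set $\tilde\ell_{t,i}=\ell_{t,i}\mathbb{I}(A_t=i)$; $$\lambda_{t,i}=\frac{\pi_{t,i}\sum_{j=1}^K\pi_{t,j}\tilde\ell_{t,j}}{\sum_{j=1}^K\pi_{t,j}^2}=\frac{\pi_{t,i}\pi_{t,A_t}\ell_{t,A_t}}{\sum_{j=1}^K\pi_{t,j}^2};$$ and update $\pi_{t+1,i}=\pi_{t,i}\big(1-\eta(\tilde\ell_{t,i}-\lambda_{t,i})\big)$ for all $i\in[K]$. *)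

theory Defs
  imports Complex_Main
begin

text \<open>Arms are 0..K-1 (i.e. the set {..<K}); rounds are 1..T; the loss of arm i in
round t is l t i. A history is the list of past actions, MOST RECENT FIRST;
a history h of length t-1 determines the LB-Prod weights pi_t.\<close>

primrec lbprod :: "(nat \<Rightarrow> nat \<Rightarrow> real) \<Rightarrow> real \<Rightarrow> nat \<Rightarrow> nat list \<Rightarrow> nat \<Rightarrow> real" where
  "lbprod l \<eta> K [] = (\<lambda>i. 1 / real K)"
| "lbprod l \<eta> K (a # h) =
     (let p = lbprod l \<eta> K h;
          t = length h + 1;
          lt = (\<lambda>i. if i = a then l t a else 0);
          lam = (\<lambda>i. p i * p a * l t a / (\<Sum>j<K. (p j)\<^sup>2))
      in (\<lambda>i. p i * (1 - \<eta> * (lt i - lam i))))"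

primrec hist_prob :: "(nat \<Rightarrow> nat \<Rightarrow> real) \<Rightarrow> real \<Rightarrow> nat \<Rightarrow> nat list \<Rightarrow> real" where
  "hist_prob l \<eta> K [] = 1"
| "hist_prob l \<eta> K (a # h) = hist_prob l \<eta> K h * lbprod l \<eta> K h a"

definition histories :: "nat \<Rightarrow> nat \<Rightarrow> nat list set" where
  "histories K n = {h. set h \<subseteq> {..<K} \<and> length h = n}"

definition exp_regret_round :: "(nat \<Rightarrow> nat \<Rightarrow> real) \<Rightarrow> real \<Rightarrow> nat \<Rightarrow> nat \<Rightarrow> nat \<Rightarrow> real" where
  "exp_regret_round l \<eta> K t istar =
     (\<Sum>h\<in>histories K (t - 1). \<Sum>a<K.
        hist_prob l \<eta> K h * lbprod l \<eta> K h a * (l t a - l t istar))"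

end

theory Submission
  imports Defs
begin


lemma recip_bound:
  fixes \<eta> x :: real
  assumes "0 < \<eta>" "\<eta> < 1" "\<bar>x\<bar> \<le> 1"
  shows "1 / (1 - \<eta> * x) \<le> 1 + \<eta> * x + \<eta>^2 * x^2 / (1 - \<eta>)"
proof -
  have ex: "\<bar>\<eta>*x\<bar> \<le> \<eta>" using assms by (simp add: abs_mult mult_left_le)
  have pos: "1 - \<eta> * x \<ge> 1 - \<eta>" using ex by linarith
  have pos2: "1 - \<eta> > 0" using assms by simp
  have "1 / (1 - \<eta> * x) = 1 + \<eta> * x + (\<eta>*x)^2 / (1 - \<eta> * x)"
    using pos pos2 by (simp add: field_simps power2_eq_square)
  also have "(\<eta>*x)^2 / (1 - \<eta> * x) \<le> (\<eta>*x)^2 / (1 - \<eta>)"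
    using pos pos2 by (intro divide_left_mono) auto
  finally show ?thesis by (simp add: power_mult_distrib)
qed

lemma pair_sq_le:
  fixes p :: "nat \<Rightarrow> real"
  assumes "i < K" "j < K" "i \<noteq> j"
  shows "(p i)^2 + (p j)^2 \<le> (\<Sum>k<K. (p k)^2)"
proof -
  have "(\<Sum>k\<in>{i,j}. (p k)^2) \<le> (\<Sum>k<K. (p k)^2)"
    using assms by (intro sum_mono2) auto
  thus ?thesis using assms by simp
qed

lemma prod_le_S:
  fixes p :: "nat \<Rightarrow> real"
  assumes "i < K" "j < K"
  shows "p i * p j \<le> (\<Sum>k<K. (p k)^2)"
proof (cases "i = j")
  case True
  have "(p i)^2 \<le> (\<Sum>k<K. (p k)^2)"
    using assms member_le_sum[of i "{..<K}" "\<lambda>k. (p k)^2"] by auto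
  thus ?thesis using True by (simp add: power2_eq_square)
next
  case False
  have "2 * (p i * p j) \<le> (p i)^2 + (p j)^2" using sum_squares_bound[of "p i" "p j"] by (simp add: mult.assoc)
  moreover have "(p i)^2 + (p j)^2 \<le> (\<Sum>k<K. (p k)^2)" using pair_sq_le assms False by blast
  moreover have "0 \<le> (p i)^2 + (p j)^2" by simp
  ultimately show ?thesis by linarith
qed

lemma prod_le_S2:
  fixes p :: "nat \<Rightarrow> real"
  assumes "i < K" "j < K" "i \<noteq> j"
  shows "2 * \<bar>p i * p j\<bar> \<le> (\<Sum>k<K. (p k)^2)"
proof -
  have "2 * \<bar>p i * p j\<bar> \<le> (p i)^2 + (p j)^2"
    using sum_squares_bound[of "\<bar>p i\<bar>" "\<bar>p j\<bar>"] by (simp add: abs_mult mult.assoc)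
  thus ?thesis using pair_sq_le[OF assms, of p] by linarith
qed

lemma step_pointwise:
  fixes p L u :: "nat \<Rightarrow> real" and \<eta> :: real and K a i :: nat
  assumes eta: "0 < \<eta>" "\<eta> < 1"
    and ppos: "\<forall>j<K. p j > 0" and L: "\<forall>j<K. \<bar>L j\<bar> \<le> 1"
    and u: "u i \<ge> 0" and a: "a < K" and i: "i < K"
  defines "S \<equiv> (\<Sum>j<K. (p j)^2)"
  defines "m \<equiv> p a * L a / S"
  defines "x \<equiv> (if i = a then L a else 0) - p i * m"
  shows "1 - \<eta> * x > 0"
    and "u i / (p i * (1 - \<eta> * x)) + ln (p i * (1 - \<eta> * x))
         \<le> u i / p i + ln (p i) + \<eta> * u i * (if i = a then L a / p a else 0) - \<eta> * u i * m - \<eta> * x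
            + \<eta>^2 / (1 - \<eta>) * u i * (if i = a then 1 / p a else p i * m^2)"
proof -
  have pi: "p i > 0" using ppos i by auto
  have pa: "p a > 0" using ppos a by auto
  have Spos: "S > 0"
  proof -
    have "(p a)^2 \<le> S" unfolding S_def using a member_le_sum[of a "{..<K}" "\<lambda>k. (p k)^2"] by auto
    thus ?thesis using pa by (smt (verit) zero_less_power)
  qed
  have La: "\<bar>L a\<bar> \<le> 1" using L a by auto
  have xb: "\<bar>x\<bar> \<le> 1"
  proof (cases "i = a")
    case True
    have "x = L a * (1 - (p a)^2 / S)" unfolding x_def m_def using True Spos
      by (simp add: field_simps power2_eq_square)
    moreover have "(p a)^2 \<le> S" unfolding S_def using a member_le_sum[of a "{..<K}" "\<lambda>k. (p k)^2"] by auto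
    hence "0 \<le> 1 - (p a)^2 / S" "1 - (p a)^2 / S \<le> 1" using Spos by (auto simp: field_simps)
    ultimately have "\<bar>x\<bar> = \<bar>L a\<bar> * (1 - (p a)^2 / S)" by (simp add: abs_mult)
    also have "\<dots> \<le> 1 * 1" using La \<open>0 \<le> 1 - (p a)^2 / S\<close> \<open>1 - (p a)^2 / S \<le> 1\<close>
      by (intro mult_mono) auto
    finally show ?thesis by simp
  next
    case False
    have "x = - (p i * p a * L a / S)" unfolding x_def m_def using False by simp
    hence "\<bar>x\<bar> = \<bar>p i * p a\<bar> * \<bar>L a\<bar> / S" using Spos by (simp add: abs_mult)
    also have "\<dots> \<le> \<bar>p i * p a\<bar> * 1 / S" using La Spos
      by (intro divide_right_mono mult_left_mono) auto
    also have "\<dots> \<le> 1" using prod_le_S2[OF i a False, of p] Spos unfolding S_def by (simp add: field_simps)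
    finally show ?thesis .
  qed
  have ex: "\<bar>\<eta>*x\<bar> \<le> \<eta>" using eta xb by (simp add: abs_mult mult_left_le)
  show pos: "1 - \<eta> * x > 0" using ex eta by linarith
  have lnb: "ln (p i * (1 - \<eta> * x)) \<le> ln (p i) - \<eta> * x"
    using ln_le_minus_one[OF pos] pi pos by (simp add: ln_mult)
  have rb: "1 / (1 - \<eta> * x) \<le> 1 + \<eta> * x + \<eta>^2 * x^2 / (1 - \<eta>)" using recip_bound eta xb by blast
  have "u i / (p i * (1 - \<eta> * x)) = (u i / p i) * (1 / (1 - \<eta> * x))" by simp
  also have "\<dots> \<le> (u i / p i) * (1 + \<eta> * x + \<eta>^2 * x^2 / (1 - \<eta>))"
    using rb u pi by (intro mult_left_mono) auto
  also have "\<dots> = u i / p i + \<eta> * u i * (x / p i) + \<eta>^2 / (1 - \<eta>) * u i * (x^2 / p i)"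
    using pi eta by (simp add: field_simps)
  also have "x / p i = (if i = a then L a / p a else 0) - m" unfolding x_def using pi
    by (auto simp: field_simps)
  also have "\<eta>^2 / (1 - \<eta>) * u i * (x^2 / p i) \<le> \<eta>^2 / (1 - \<eta>) * u i * (if i = a then 1 / p a else p i * m^2)"
  proof -
    have "x^2 / p i \<le> (if i = a then 1 / p a else p i * m^2)"
    proof (cases "i = a")
      case True
      have "x^2 \<le> 1" using xb by (simp add: abs_square_le_1)
      thus ?thesis using True pa by (simp add: divide_right_mono)
    next
      case False
      then show ?thesis unfolding x_def using pi by (simp add: power2_eq_square field_simps)
    qed
    moreover have "0 \<le> \<eta>^2 / (1 - \<eta>) * u i" using eta u by simp
    ultimately show ?thesis by (metis mult_left_mono)
  qed
  finally have "u i / (p i * (1 - \<eta> * x)) \<le> u i / p i + \<eta> * u i * ((if i = a then L a / p a else 0) - m)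
      + \<eta>^2 / (1 - \<eta>) * u i * (if i = a then 1 / p a else p i * m^2)" by simp
  thus "u i / (p i * (1 - \<eta> * x)) + ln (p i * (1 - \<eta> * x))
         \<le> u i / p i + ln (p i) + \<eta> * u i * (if i = a then L a / p a else 0) - \<eta> * u i * m - \<eta> * x
            + \<eta>^2 / (1 - \<eta>) * u i * (if i = a then 1 / p a else p i * m^2)"
    using lnb by (simp add: algebra_simps)
qed

lemma step_sum:
  fixes p L u :: "nat \<Rightarrow> real" and \<eta> :: real and K a :: nat
  assumes eta: "0 < \<eta>" "\<eta> < 1"
    and ppos: "\<forall>j<K. p j > 0" and psum: "(\<Sum>j<K. p j) = 1" and L: "\<forall>j<K. \<bar>L j\<bar> \<le> 1"
    and u: "\<forall>j<K. u j \<ge> 0" and usum: "(\<Sum>j<K. u j) = 1" and a: "a < K"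
  defines "S \<equiv> (\<Sum>j<K. (p j)^2)"
  defines "q \<equiv> (\<lambda>i. p i * (1 - \<eta> * ((if i = a then L a else 0) - p i * p a * L a / S)))"
  shows "\<forall>i<K. q i > 0" and "(\<Sum>i<K. q i) = 1"
    and "(\<Sum>i<K. u i / q i + ln (q i)) \<le> (\<Sum>i<K. u i / p i + ln (p i))
          + \<eta> * u a * L a / p a - \<eta> * L a
          + \<eta>^2 / (1 - \<eta>) * (u a / p a + (p a * L a / S)^2 * (\<Sum>i<K. u i * p i))"
proof -
  define m where "m = p a * L a / S"
  define x where "x = (\<lambda>i. (if i = a then L a else 0) - p i * m)"
  have qx: "q i = p i * (1 - \<eta> * x i)" for i unfolding q_def x_def m_def by simp
  have pw: "1 - \<eta> * x i > 0"
       "u i / (p i * (1 - \<eta> * x i)) + ln (p i * (1 - \<eta> * x i))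
         \<le> u i / p i + ln (p i) + \<eta> * u i * (if i = a then L a / p a else 0) - \<eta> * u i * m - \<eta> * x i
            + \<eta>^2 / (1 - \<eta>) * u i * (if i = a then 1 / p a else p i * m^2)" if i: "i < K" for i
    using step_pointwise[OF eta ppos L _ a i, of u] u i unfolding x_def m_def S_def by auto
  show "\<forall>i<K. q i > 0" using pw(1) ppos qx by auto
  have sx: "(\<Sum>i<K. p i * x i) = 0"
  proof -
    have "(\<Sum>i<K. p i * x i) = (\<Sum>i<K. (if i = a then p a * L a else 0)) - m * (\<Sum>i<K. (p i)^2)"
    proof -
      have "p i * x i = (if i = a then p a * L a else 0) - m * (p i)^2" for i
        unfolding x_def by (simp add: algebra_simps power2_eq_square)
      thus ?thesis by (simp add: sum_subtractf sum_distrib_left)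
    qed
    also have "\<dots> = p a * L a - m * S" using a unfolding S_def by simp
    also have "\<dots> = 0" unfolding m_def
    proof -
      have "S > 0"
      proof -
        have "(p a)^2 \<le> S" unfolding S_def using a member_le_sum[of a "{..<K}" "\<lambda>k. (p k)^2"] by auto
        thus ?thesis using ppos a by (smt (verit) zero_less_power)
      qed
      thus "p a * L a - p a * L a / S * S = 0" by simp
    qed
    finally show ?thesis .
  qed
  show "(\<Sum>i<K. q i) = 1"
  proof -
    have "(\<Sum>i<K. q i) = (\<Sum>i<K. p i) - \<eta> * (\<Sum>i<K. p i * x i)"
      unfolding qx by (simp add: algebra_simps sum_subtractf sum_distrib_left)
    thus ?thesis using sx psum by simp
  qed
  have sx2: "(\<Sum>i<K. x i) = L a - m"
  proof -
    have "(\<Sum>i<K. x i) = (\<Sum>i<K. (if i = a then L a else 0)) - m * (\<Sum>i<K. p i)"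
      unfolding x_def by (simp add: algebra_simps sum_subtractf sum_distrib_left)
    thus ?thesis using a psum by simp
  qed
  have "(\<Sum>i<K. u i / q i + ln (q i)) \<le> (\<Sum>i<K. u i / p i + ln (p i) + \<eta> * u i * (if i = a then L a / p a else 0) - \<eta> * u i * m - \<eta> * x i
            + \<eta>^2 / (1 - \<eta>) * ((if i = a then u a / p a else 0) + m^2 * (u i * p i)))"
  proof (rule sum_mono)
    fix i assume "i \<in> {..<K}"
    hence i: "i < K" by simp
    have "\<eta>^2 / (1 - \<eta>) * u i * (if i = a then 1 / p a else p i * m^2)
        \<le> \<eta>^2 / (1 - \<eta>) * ((if i = a then u a / p a else 0) + m^2 * (u i * p i))"
    proof -
      have "u i * (if i = a then 1 / p a else p i * m^2) \<le> (if i = a then u a / p a else 0) + m^2 * (u i * p i)"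
        using u ppos i by (auto simp: algebra_simps)
      moreover have "0 \<le> \<eta>^2 / (1 - \<eta>)" using eta by simp
      ultimately show ?thesis by (metis mult.assoc mult_left_mono)
    qed
    thus "u i / q i + ln (q i) \<le> u i / p i + ln (p i) + \<eta> * u i * (if i = a then L a / p a else 0) - \<eta> * u i * m - \<eta> * x i
            + \<eta>^2 / (1 - \<eta>) * ((if i = a then u a / p a else 0) + m^2 * (u i * p i))"
      using pw(2)[OF i] unfolding qx by linarith
  qed
  also have "\<dots> = (\<Sum>i<K. u i / p i + ln (p i)) + \<eta> * (\<Sum>i<K. (if i = a then u a * L a / p a else 0))
       - \<eta> * m * (\<Sum>i<K. u i) - \<eta> * (\<Sum>i<K. x i)
       + \<eta>^2 / (1 - \<eta>) * ((\<Sum>i<K. (if i = a then u a / p a else 0)) + m^2 * (\<Sum>i<K. u i * p i))"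
  proof -
    define C where "C = \<eta>^2 / (1 - \<eta>)"
    define g1 where "g1 = (\<lambda>i. if i = a then u a * L a / p a else (0::real))"
    define g2 where "g2 = (\<lambda>i. if i = a then u a / p a else (0::real))"
    have pt: "u i / p i + ln (p i) + \<eta> * u i * (if i = a then L a / p a else 0) - \<eta> * u i * m - \<eta> * x i
            + C * ((if i = a then u a / p a else 0) + m^2 * (u i * p i))
         = (u i / p i + ln (p i)) + \<eta> * g1 i - (\<eta> * m) * u i - \<eta> * x i + C * g2 i + (C * m^2) * (u i * p i)" for i
      unfolding g1_def g2_def by (auto simp: algebra_simps)
    have "(\<Sum>i<K. (u i / p i + ln (p i)) + \<eta> * g1 i - (\<eta> * m) * u i - \<eta> * x i + C * g2 i + (C * m^2) * (u i * p i))
        = (\<Sum>i<K. u i / p i + ln (p i)) + \<eta> * (\<Sum>i<K. g1 i) - (\<eta> * m) * (\<Sum>i<K. u i) - \<eta> * (\<Sum>i<K. x i)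
          + C * (\<Sum>i<K. g2 i) + (C * m^2) * (\<Sum>i<K. u i * p i)"
      by (simp add: sum.distrib sum_subtractf sum_distrib_left)
    thus ?thesis unfolding C_def[symmetric] pt unfolding g1_def g2_def by (simp add: algebra_simps)
  qed
  also have "\<dots> = (\<Sum>i<K. u i / p i + ln (p i)) + \<eta> * u a * L a / p a - \<eta> * L a
          + \<eta>^2 / (1 - \<eta>) * (u a / p a + m^2 * (\<Sum>i<K. u i * p i))"
    using a usum sx2 by (simp add: algebra_simps) (metis distrib_left)
  finally show "(\<Sum>i<K. u i / q i + ln (q i)) \<le> (\<Sum>i<K. u i / p i + ln (p i))
          + \<eta> * u a * L a / p a - \<eta> * L a
          + \<eta>^2 / (1 - \<eta>) * (u a / p a + (p a * L a / S)^2 * (\<Sum>i<K. u i * p i))"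
    unfolding m_def .
qed

lemma var_bound:
  fixes p L u :: "nat \<Rightarrow> real" and K :: nat
  assumes ppos: "\<forall>j<K. p j > 0" and L: "\<forall>j<K. \<bar>L j\<bar> \<le> 1"
    and u: "\<forall>j<K. u j \<ge> 0" and usum: "(\<Sum>j<K. u j) = 1" and K: "K \<ge> 1"
  defines "S \<equiv> (\<Sum>j<K. (p j)^2)"
  shows "(\<Sum>a<K. p a * (p a * L a / S)^2 * (\<Sum>i<K. u i * p i)) \<le> 1"
proof -
  have Spos: "S > 0"
  proof -
    have "(p 0)^2 \<le> S" unfolding S_def using K member_le_sum[of 0 "{..<K}" "\<lambda>k. (p k)^2"] by auto
    thus ?thesis using ppos K by (smt (verit) less_le_trans zero_less_one zero_less_power)
  qed
  define W where "W = (\<Sum>i<K. u i * p i)"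
  have W0: "W \<ge> 0" unfolding W_def using u ppos by (auto intro!: sum_nonneg simp: less_imp_le)
  have "(\<Sum>a<K. p a * (p a * L a / S)^2 * W) \<le> (\<Sum>a<K. (p a)^3 / S^2 * W)"
  proof (rule sum_mono)
    fix a assume "a \<in> {..<K}"
    hence "(L a)^2 \<le> 1" "p a > 0" using L ppos by (auto simp: abs_square_le_1)
    hence "p a * (p a * L a / S)^2 \<le> (p a)^3 / S^2"
      using Spos by (simp add: power_mult_distrib power_divide field_simps power3_eq_cube power2_eq_square mult_left_le)
    thus "p a * (p a * L a / S)^2 * W \<le> (p a)^3 / S^2 * W" using W0 by (rule mult_right_mono)
  qed
  also have "\<dots> = W * (\<Sum>a<K. (p a)^3) / S^2" by (simp add: sum_distrib_left sum_divide_distrib mult.commute)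
  finally have c1: "(\<Sum>a<K. p a * (p a * L a / S)^2 * W) \<le> W * (\<Sum>a<K. (p a)^3) / S^2" .
  have "W * (\<Sum>a<K. (p a)^3) = (\<Sum>i<K. u i * (\<Sum>a<K. (p a)^2 * (p i * p a)))"
    unfolding W_def apply (simp add: sum_distrib_left sum_distrib_right power3_eq_cube power2_eq_square algebra_simps)
    apply (subst sum.swap) apply (simp add: algebra_simps) done
  also have "\<dots> \<le> (\<Sum>i<K. u i * (\<Sum>a<K. (p a)^2 * S))"
  proof (rule sum_mono)
    fix i assume i: "i \<in> {..<K}"
    have "(\<Sum>a<K. (p a)^2 * (p i * p a)) \<le> (\<Sum>a<K. (p a)^2 * S)"
      using prod_le_S[of i K _ p] i unfolding S_def by (intro sum_mono mult_left_mono) auto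
    thus "u i * (\<Sum>a<K. (p a)^2 * (p i * p a)) \<le> u i * (\<Sum>a<K. (p a)^2 * S)"
      using u i by (intro mult_left_mono) auto
  qed
  also have "\<dots> = S^2" using usum unfolding S_def by (simp add: sum_distrib_right[symmetric] power2_eq_square)
  finally have "W * (\<Sum>a<K. (p a)^3) \<le> S^2" .
  hence "W * (\<Sum>a<K. (p a)^3) / S^2 \<le> 1" using Spos by simp
  thus ?thesis using c1 unfolding W_def by linarith
qed

lemma step_exp:
  fixes p L u :: "nat \<Rightarrow> real" and \<eta> :: real and K :: nat
  assumes eta: "0 < \<eta>" "\<eta> < 1"
    and ppos: "\<forall>j<K. p j > 0" and psum: "(\<Sum>j<K. p j) = 1" and L: "\<forall>j<K. \<bar>L j\<bar> \<le> 1"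
    and u: "\<forall>j<K. u j \<ge> 0" and usum: "(\<Sum>j<K. u j) = 1" and K: "K \<ge> 1"
  defines "S \<equiv> (\<Sum>j<K. (p j)^2)"
  defines "q \<equiv> (\<lambda>a i. p i * (1 - \<eta> * ((if i = a then L a else 0) - p i * p a * L a / S)))"
  shows "(\<Sum>a<K. p a * (\<Sum>i<K. u i / q a i + ln (q a i)))
     \<le> (\<Sum>i<K. u i / p i + ln (p i)) - \<eta> * (\<Sum>a<K. p a * L a) + \<eta> * (\<Sum>i<K. u i * L i)
        + 2 * \<eta>^2 / (1 - \<eta>)"
proof -
  define Phi where "Phi = (\<Sum>i<K. u i / p i + ln (p i))"
  define C where "C = \<eta>^2 / (1 - \<eta>)"
  define W where "W = (\<Sum>i<K. u i * p i)"
  have C0: "C \<ge> 0" unfolding C_def using eta by simp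
  have "(\<Sum>a<K. p a * (\<Sum>i<K. u i / q a i + ln (q a i)))
     \<le> (\<Sum>a<K. p a * (Phi + \<eta> * u a * L a / p a - \<eta> * L a + C * (u a / p a + (p a * L a / S)^2 * W)))"
  proof (rule sum_mono)
    fix a assume "a \<in> {..<K}"
    hence a: "a < K" by simp
    have "(\<Sum>i<K. u i / q a i + ln (q a i)) \<le> Phi + \<eta> * u a * L a / p a - \<eta> * L a + C * (u a / p a + (p a * L a / S)^2 * W)"
      using step_sum(3)[OF eta ppos psum L u usum a] unfolding q_def S_def Phi_def C_def W_def by simp
    thus "p a * (\<Sum>i<K. u i / q a i + ln (q a i)) \<le> p a * (Phi + \<eta> * u a * L a / p a - \<eta> * L a + C * (u a / p a + (p a * L a / S)^2 * W))"
      using ppos a by (intro mult_left_mono) auto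
  qed
  also have "\<dots> = Phi * (\<Sum>a<K. p a) + \<eta> * (\<Sum>a<K. u a * L a) - \<eta> * (\<Sum>a<K. p a * L a)
       + C * ((\<Sum>a<K. u a) + (\<Sum>a<K. p a * (p a * L a / S)^2 * W))"
  proof -
    have "p a * (Phi + \<eta> * u a * L a / p a - \<eta> * L a + C * (u a / p a + (p a * L a / S)^2 * W))
       = Phi * p a + \<eta> * (u a * L a) - \<eta> * (p a * L a) + C * (u a + p a * (p a * L a / S)^2 * W)" if "a < K" for a
      using ppos that by (auto simp: field_simps)
    hence "(\<Sum>a<K. p a * (Phi + \<eta> * u a * L a / p a - \<eta> * L a + C * (u a / p a + (p a * L a / S)^2 * W)))
       = (\<Sum>a<K. Phi * p a + \<eta> * (u a * L a) - \<eta> * (p a * L a) + C * (u a + p a * (p a * L a / S)^2 * W))"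
      by (intro sum.cong) auto
    also have "\<dots> = Phi * (\<Sum>a<K. p a) + \<eta> * (\<Sum>a<K. u a * L a) - \<eta> * (\<Sum>a<K. p a * L a)
       + C * ((\<Sum>a<K. u a) + (\<Sum>a<K. p a * (p a * L a / S)^2 * W))"
      by (simp add: sum.distrib sum_subtractf sum_distrib_left[symmetric])
    finally show ?thesis .
  qed
  also have "\<dots> \<le> Phi - \<eta> * (\<Sum>a<K. p a * L a) + \<eta> * (\<Sum>i<K. u i * L i) + C * 2"
  proof -
    have "(\<Sum>a<K. p a * (p a * L a / S)^2 * W) \<le> 1"
      using var_bound[OF ppos L u usum K] unfolding S_def W_def .
    hence "C * ((\<Sum>a<K. u a) + (\<Sum>a<K. p a * (p a * L a / S)^2 * W)) \<le> C * 2"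
      using usum C0 by (intro mult_left_mono) auto
    thus ?thesis using psum by simp
  qed
  finally show ?thesis unfolding Phi_def C_def by (simp add: mult.commute)
qed



lemma lbprod_Cons_eq:
  "lbprod l \<eta> K (a # h) = (\<lambda>i. lbprod l \<eta> K h i * (1 - \<eta> * ((if i = a then l (Suc (length h)) a else 0)
      - lbprod l \<eta> K h i * lbprod l \<eta> K h a * l (Suc (length h)) a / (\<Sum>j<K. (lbprod l \<eta> K h j)^2))))"
  by (simp add: Let_def)

lemma hist_split:
  "(\<Sum>h\<in>histories K (Suc n). f h) = (\<Sum>h\<in>histories K n. \<Sum>a<K. f (a # h))"
proof -
  have eq: "histories K (Suc n) = (\<lambda>(a,h). a # h) ` ({..<K} \<times> histories K n)"
    unfolding histories_def
    by (auto simp: length_Suc_conv image_iff)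
  have inj: "inj_on (\<lambda>(a,h). a # h) ({..<K} \<times> histories K n)" by (auto simp: inj_on_def)
  have fin: "finite (histories K n)" unfolding histories_def by (rule finite_lists_length_eq) simp
  have "(\<Sum>h\<in>histories K (Suc n). f h) = (\<Sum>x\<in>{..<K} \<times> histories K n. f (fst x # snd x))"
    unfolding eq by (subst sum.reindex[OF inj]) (simp add: case_prod_beta)
  also have "\<dots> = (\<Sum>a<K. \<Sum>h\<in>histories K n. f (a # h))"
    by (simp add: sum.cartesian_product case_prod_beta)
  also have "\<dots> = (\<Sum>h\<in>histories K n. \<Sum>a<K. f (a # h))" by (rule sum.swap)
  finally show ?thesis .
qed

lemma hist0: "histories K 0 = {[]}" unfolding histories_def by auto

context
  fixes l :: "nat \<Rightarrow> nat \<Rightarrow> real" and \<eta> :: real and K T :: nat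
  assumes eta: "0 < \<eta>" "\<eta> < 1" and T: "T \<ge> 1" and K: "K \<ge> 1"
    and lb: "\<And>t i. 1 \<le> t \<Longrightarrow> t \<le> T \<Longrightarrow> i < K \<Longrightarrow> \<bar>l t i\<bar> \<le> 1"
begin

lemma valid: "set h \<subseteq> {..<K} \<Longrightarrow> length h \<le> T \<Longrightarrow>
   (\<forall>i<K. lbprod l \<eta> K h i > 0) \<and> (\<Sum>i<K. lbprod l \<eta> K h i) = 1"
proof (induction h)
  case Nil
  then show ?case using K by simp
next
  case (Cons a h)
  let ?p = "lbprod l \<eta> K h"
  have a: "a < K" using Cons by auto
  have IH: "(\<forall>i<K. ?p i > 0)" "(\<Sum>i<K. ?p i) = 1" using Cons by auto
  have L: "\<forall>j<K. \<bar>l (Suc (length h)) j\<bar> \<le> 1" using lb Cons by auto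
  have u: "\<forall>j<K. (\<lambda>_. 1 / real K) j \<ge> 0" "(\<Sum>j<K. (\<lambda>_. 1 / real K) j) = 1" using K by auto
  note st = step_sum[OF eta IH(1) IH(2) L u(1) u(2) a]
  show ?case using st(1,2) unfolding lbprod_Cons_eq by simp
qed

lemma hp_pos: "set h \<subseteq> {..<K} \<Longrightarrow> length h \<le> T \<Longrightarrow> hist_prob l \<eta> K h > 0"
proof (induction h)
  case Nil thus ?case by simp
next
  case (Cons a h)
  have "lbprod l \<eta> K h a > 0" using valid[of h] Cons by auto
  thus ?case using Cons by simp
qed

lemma hp_sum: "n \<le> T \<Longrightarrow> (\<Sum>h\<in>histories K n. hist_prob l \<eta> K h) = 1"
proof (induction n)
  case 0 thus ?case by (simp add: hist0)
next
  case (Suc n)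
  have "(\<Sum>h\<in>histories K (Suc n). hist_prob l \<eta> K h)
      = (\<Sum>h\<in>histories K n. hist_prob l \<eta> K h * (\<Sum>a<K. lbprod l \<eta> K h a))"
    by (simp add: hist_split sum_distrib_left)
  also have "\<dots> = (\<Sum>h\<in>histories K n. hist_prob l \<eta> K h)"
    using valid Suc.prems by (intro sum.cong) (auto simp: histories_def)
  finally show ?case using Suc by simp
qed

definition Ephi :: "(nat \<Rightarrow> real) \<Rightarrow> nat \<Rightarrow> real" where
  "Ephi u n = (\<Sum>h\<in>histories K n. hist_prob l \<eta> K h * (\<Sum>i<K. u i / lbprod l \<eta> K h i + ln (lbprod l \<eta> K h i)))"

lemma one_round:
  assumes u: "\<forall>j<K. u j \<ge> 0" "(\<Sum>j<K. u j) = 1" and n: "n < T"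
  shows "\<eta> * (\<Sum>h\<in>histories K n. hist_prob l \<eta> K h *
            ((\<Sum>a<K. lbprod l \<eta> K h a * l (Suc n) a) - (\<Sum>i<K. u i * l (Suc n) i)))
     \<le> Ephi u n - Ephi u (Suc n) + 2 * \<eta>^2 / (1 - \<eta>)"
proof -
  define c where "c = 2 * \<eta>^2 / (1 - \<eta>)"
  define Phi where "Phi = (\<lambda>h. (\<Sum>i<K. u i / lbprod l \<eta> K h i + ln (lbprod l \<eta> K h i)))"
  define R where "R = (\<lambda>h. (\<Sum>a<K. lbprod l \<eta> K h a * l (Suc n) a) - (\<Sum>i<K. u i * l (Suc n) i))"
  have key: "(\<Sum>a<K. lbprod l \<eta> K h a * Phi (a # h)) \<le> Phi h - \<eta> * R h + c"
    if h: "h \<in> histories K n" for h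
  proof -
    let ?p = "lbprod l \<eta> K h"
    have hl: "set h \<subseteq> {..<K}" "length h = n" using h by (auto simp: histories_def)
    have V: "\<forall>i<K. ?p i > 0" "(\<Sum>i<K. ?p i) = 1" using valid[OF hl(1)] hl n by auto
    have L: "\<forall>j<K. \<bar>l (Suc (length h)) j\<bar> \<le> 1" using lb hl n by auto
    note st = step_exp[OF eta V(1) V(2) L u(1) u(2) K]
    show ?thesis using st unfolding Phi_def R_def c_def lbprod_Cons_eq using hl(2)
      by (simp add: algebra_simps)
  qed
  have "Ephi u (Suc n) = (\<Sum>h\<in>histories K n. hist_prob l \<eta> K h * (\<Sum>a<K. lbprod l \<eta> K h a * Phi (a # h)))"
    unfolding Ephi_def Phi_def by (simp add: hist_split sum_distrib_left mult.assoc)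
  also have "\<dots> \<le> (\<Sum>h\<in>histories K n. hist_prob l \<eta> K h * (Phi h - \<eta> * R h + c))"
  proof (rule sum_mono)
    fix h assume h: "h \<in> histories K n"
    have "hist_prob l \<eta> K h > 0" using hp_pos[of h] h n by (auto simp: histories_def)
    thus "hist_prob l \<eta> K h * (\<Sum>a<K. lbprod l \<eta> K h a * Phi (a # h)) \<le> hist_prob l \<eta> K h * (Phi h - \<eta> * R h + c)"
      using key[OF h] by (intro mult_left_mono) auto
  qed
  also have "\<dots> = Ephi u n - \<eta> * (\<Sum>h\<in>histories K n. hist_prob l \<eta> K h * R h) + c * (\<Sum>h\<in>histories K n. hist_prob l \<eta> K h)"
    unfolding Ephi_def Phi_def by (simp add: algebra_simps sum.distrib sum_subtractf sum_distrib_left)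
  also have "\<dots> = Ephi u n - \<eta> * (\<Sum>h\<in>histories K n. hist_prob l \<eta> K h * R h) + c"
    using hp_sum[of n] n by simp
  finally show ?thesis unfolding R_def c_def by simp
qed

lemma main_ctx:
  shows "(\<forall>h\<in>(\<Union>n<T. histories K n).
            (\<forall>i<K. lbprod l \<eta> K h i > 0) \<and> (\<Sum>i<K. lbprod l \<eta> K h i) = 1)
       \<and> (\<forall>istar<K. (\<Sum>t=1..T. exp_regret_round l \<eta> K t istar)
              \<le> 2 + real K * ln (real T) / \<eta> + 2 * \<eta> * real T / (1 - \<eta>))"
proof (rule conjI)
  show "\<forall>h\<in>(\<Union>n<T. histories K n).
            (\<forall>i<K. lbprod l \<eta> K h i > 0) \<and> (\<Sum>i<K. lbprod l \<eta> K h i) = 1"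
  proof
    fix h assume "h \<in> (\<Union>n<T. histories K n)"
    then obtain n where "n < T" "h \<in> histories K n" by auto
    thus "(\<forall>i<K. lbprod l \<eta> K h i > 0) \<and> (\<Sum>i<K. lbprod l \<eta> K h i) = 1"
      using valid[of h] by (auto simp: histories_def)
  qed
next
  show "\<forall>istar<K. (\<Sum>t=1..T. exp_regret_round l \<eta> K t istar)
              \<le> 2 + real K * ln (real T) / \<eta> + 2 * \<eta> * real T / (1 - \<eta>)"
  proof (intro allI impI)
  fix istar assume istar: "istar < K"
  define u where "u = (\<lambda>i. 1 / (real T * real K) + (if i = istar then 1 - 1 / real T else 0))"
  have Tr: "real T \<ge> 1" using T by simp
  have Kr: "real K \<ge> 1" using K by simp
  have u_pos: "u i > 0" for i
  proof -
    have a1: "1 / real T \<le> 1" using Tr by simp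
    have a2: "0 < 1 / (real T * real K)" using Tr Kr by simp
    show ?thesis
    proof (cases "i = istar")
      case True
      hence "u i = 1 / (real T * real K) + (1 - 1 / real T)" unfolding u_def by simp
      thus ?thesis using a1 a2 by linarith
    next
      case False
      hence "u i = 1 / (real T * real K)" unfolding u_def by simp
      thus ?thesis using a2 by linarith
    qed
  qed
  have u0: "\<forall>j<K. u j \<ge> 0" using u_pos less_imp_le by blast
  have usum: "(\<Sum>j<K. u j) = 1"
  proof -
    have "(\<Sum>j<K. u j) = real K * (1 / (real T * real K)) + (1 - 1 / real T)"
      unfolding u_def using istar by (simp add: sum.distrib)
    also have "\<dots> = 1" using Tr Kr by (simp add: field_simps)
    finally show ?thesis .
  qed
  define c where "c = 2 * \<eta>^2 / (1 - \<eta>)"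
  define R where "R = (\<lambda>n. \<Sum>h\<in>histories K n. hist_prob l \<eta> K h *
            ((\<Sum>a<K. lbprod l \<eta> K h a * l (Suc n) a) - (\<Sum>i<K. u i * l (Suc n) i)))"
  define d where "d = (\<lambda>n. (\<Sum>i<K. u i * l (Suc n) i) - l (Suc n) istar)"
  have regeq: "exp_regret_round l \<eta> K (Suc n) istar = R n + d n" if n: "n < T" for n
  proof -
    have "exp_regret_round l \<eta> K (Suc n) istar
        = (\<Sum>h\<in>histories K n. hist_prob l \<eta> K h * ((\<Sum>a<K. lbprod l \<eta> K h a * l (Suc n) a) - l (Suc n) istar))"
      unfolding exp_regret_round_def
    proof (simp, intro sum.cong refl)
      fix h assume h: "h \<in> histories K n"
      have S1: "(\<Sum>a<K. lbprod l \<eta> K h a) = 1" using valid[of h] h n by (auto simp: histories_def)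
      have "(\<Sum>a<K. hist_prob l \<eta> K h * lbprod l \<eta> K h a * (l (Suc n) a - l (Suc n) istar))
          = hist_prob l \<eta> K h * ((\<Sum>a<K. lbprod l \<eta> K h a * l (Suc n) a) - l (Suc n) istar * (\<Sum>a<K. lbprod l \<eta> K h a))"
        by (simp add: algebra_simps sum_subtractf sum_distrib_left)
      thus "(\<Sum>a<K. hist_prob l \<eta> K h * lbprod l \<eta> K h a * (l (Suc n) a - l (Suc n) istar))
          = hist_prob l \<eta> K h * ((\<Sum>a<K. lbprod l \<eta> K h a * l (Suc n) a) - l (Suc n) istar)"
        using S1 by simp
    qed
    also have "\<dots> = R n + d n * (\<Sum>h\<in>histories K n. hist_prob l \<eta> K h)"
    proof -
      have "hist_prob l \<eta> K h * ((\<Sum>a<K. lbprod l \<eta> K h a * l (Suc n) a) - l (Suc n) istar)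
          = hist_prob l \<eta> K h * ((\<Sum>a<K. lbprod l \<eta> K h a * l (Suc n) a) - (\<Sum>i<K. u i * l (Suc n) i))
            + d n * hist_prob l \<eta> K h" for h
        unfolding d_def by (simp add: algebra_simps)
      hence "(\<Sum>h\<in>histories K n. hist_prob l \<eta> K h * ((\<Sum>a<K. lbprod l \<eta> K h a * l (Suc n) a) - l (Suc n) istar))
         = (\<Sum>h\<in>histories K n. hist_prob l \<eta> K h * ((\<Sum>a<K. lbprod l \<eta> K h a * l (Suc n) a) - (\<Sum>i<K. u i * l (Suc n) i))
            + d n * hist_prob l \<eta> K h)" by simp
      also have "\<dots> = R n + d n * (\<Sum>h\<in>histories K n. hist_prob l \<eta> K h)"
        unfolding R_def by (simp add: sum.distrib sum_distrib_left)
      finally show ?thesis .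
    qed
    also have "\<dots> = R n + d n" using hp_sum[of n] n by simp
    finally show ?thesis .
  qed
  have dle: "d n \<le> 2 / real T" if n: "n < T" for n
  proof -
    have lbn: "\<bar>l (Suc n) i\<bar> \<le> 1" if "i < K" for i using lb[of "Suc n" i] n that by simp
    have "(\<Sum>i<K. u i * l (Suc n) i) = (1 / (real T * real K)) * (\<Sum>i<K. l (Suc n) i) + (1 - 1 / real T) * l (Suc n) istar"
    proof -
      have "u i * l (Suc n) i = (1 / (real T * real K)) * l (Suc n) i + (if i = istar then (1 - 1 / real T) * l (Suc n) istar else 0)" for i
        unfolding u_def by (simp add: algebra_simps)
      hence "(\<Sum>i<K. u i * l (Suc n) i) = (\<Sum>i<K. (1 / (real T * real K)) * l (Suc n) i + (if i = istar then (1 - 1 / real T) * l (Suc n) istar else 0))"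
        by simp
      also have "\<dots> = (1 / (real T * real K)) * (\<Sum>i<K. l (Suc n) i) + (1 - 1 / real T) * l (Suc n) istar"
        using istar by (simp add: sum.distrib sum_distrib_left)
      finally show ?thesis .
    qed
    moreover have "(\<Sum>i<K. l (Suc n) i) \<le> real K"
    proof -
      have "(\<Sum>i<K. l (Suc n) i) \<le> (\<Sum>i<K. (1::real))" using lbn by (intro sum_mono) (auto simp: abs_le_iff)
      thus ?thesis by simp
    qed
    moreover have "- l (Suc n) istar \<le> 1" using lbn[OF istar] by (simp add: abs_le_iff)
    ultimately have "d n \<le> (1 / (real T * real K)) * real K + 1 / real T"
    proof -
      assume e: "(\<Sum>i<K. u i * l (Suc n) i) = (1 / (real T * real K)) * (\<Sum>i<K. l (Suc n) i) + (1 - 1 / real T) * l (Suc n) istar"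
        and s: "(\<Sum>i<K. l (Suc n) i) \<le> real K" and m: "- l (Suc n) istar \<le> 1"
      have p: "0 \<le> 1 / (real T * real K)" by simp
      have "d n = (1 / (real T * real K)) * (\<Sum>i<K. l (Suc n) i) + (1 / real T) * (- l (Suc n) istar)"
        unfolding d_def e by (simp add: algebra_simps)
      also have "\<dots> \<le> (1 / (real T * real K)) * real K + (1 / real T) * 1"
        using s m p Tr by (intro add_mono mult_left_mono) auto
      finally show ?thesis by simp
    qed
    also have "\<dots> = 2 / real T" using Kr Tr by (simp add: field_simps)
    finally show ?thesis .
  qed
  have C: "\<eta> * (\<Sum>n<T. R n) \<le> Ephi u 0 - Ephi u T + real T * c"
  proof -
    have "\<eta> * (\<Sum>n<T. R n) = (\<Sum>n<T. \<eta> * R n)" by (simp add: sum_distrib_left)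
    also have "\<dots> \<le> (\<Sum>n<T. Ephi u n - Ephi u (Suc n) + c)"
      using one_round[OF u0 usum] unfolding R_def c_def by (intro sum_mono) auto
    also have "\<dots> = Ephi u 0 - Ephi u T + real T * c"
      by (simp add: sum.distrib sum_lessThan_telescope')
    finally show ?thesis .
  qed
  have E0: "Ephi u 0 = (\<Sum>i<K. u i * real K + ln (1 / real K))"
    unfolding Ephi_def by (simp add: hist0)
  have ET: "Ephi u T \<ge> (\<Sum>i<K. 1 + ln (u i))"
  proof -
    have "Ephi u T \<ge> (\<Sum>h\<in>histories K T. hist_prob l \<eta> K h * (\<Sum>i<K. 1 + ln (u i)))"
      unfolding Ephi_def
    proof (rule sum_mono)
      fix h assume h: "h \<in> histories K T"
      have hl: "set h \<subseteq> {..<K}" "length h \<le> T" using h by (auto simp: histories_def)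
      have V: "\<forall>i<K. lbprod l \<eta> K h i > 0" using valid[OF hl] by auto
      have "(\<Sum>i<K. 1 + ln (u i)) \<le> (\<Sum>i<K. u i / lbprod l \<eta> K h i + ln (lbprod l \<eta> K h i))"
      proof (rule sum_mono)
        fix i assume "i \<in> {..<K}"
        hence pp: "lbprod l \<eta> K h i > 0" using V by auto
        have up: "u i > 0" by (rule u_pos)
        have "ln (u i / lbprod l \<eta> K h i) \<le> u i / lbprod l \<eta> K h i - 1"
          using ln_le_minus_one pp up by simp
        moreover have "ln (u i / lbprod l \<eta> K h i) = ln (u i) - ln (lbprod l \<eta> K h i)"
          using pp up by (simp add: ln_div)
        ultimately show "1 + ln (u i) \<le> u i / lbprod l \<eta> K h i + ln (lbprod l \<eta> K h i)" by linarith
      qed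
      thus "hist_prob l \<eta> K h * (\<Sum>i<K. 1 + ln (u i))
          \<le> hist_prob l \<eta> K h * (\<Sum>i<K. u i / lbprod l \<eta> K h i + ln (lbprod l \<eta> K h i))"
        using hp_pos[OF hl] by (intro mult_left_mono) auto
    qed
    also have "(\<Sum>h\<in>histories K T. hist_prob l \<eta> K h * (\<Sum>i<K. 1 + ln (u i))) = (\<Sum>i<K. 1 + ln (u i))"
      using hp_sum[of T] by (simp add: sum_distrib_right[symmetric])
    finally show ?thesis .
  qed
  have D: "Ephi u 0 - Ephi u T \<le> real K * ln (real T)"
  proof -
    have "Ephi u 0 - Ephi u T \<le> (\<Sum>i<K. u i * real K + ln (1 / real K)) - (\<Sum>i<K. 1 + ln (u i))"
      using E0 ET by simp
    also have "\<dots> = (\<Sum>i<K. (u i * real K - 1) + (ln (1 / real K) - ln (u i)))"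
      by (simp add: sum_subtractf sum.distrib)
    also have "\<dots> \<le> (\<Sum>i<K. (u i * real K - 1) + ln (real T))"
    proof (rule sum_mono)
      fix i assume "i \<in> {..<K}"
      have up: "u i > 0" by (rule u_pos)
      have ge: "real K * u i * real T \<ge> 1"
      proof -
        have "real K * u i * real T = 1 + (if i = istar then real K * real T - real K else 0)"
          unfolding u_def using Kr Tr by (simp add: field_simps)
        moreover have "real K * real T - real K \<ge> 0" using Kr Tr
          by (metis diff_ge_0_iff_ge mult_cancel_left1 mult_left_mono of_nat_0_le_iff)
        ultimately show ?thesis by auto
      qed
      have "ln (real K * u i * real T) \<ge> 0" using ge by simp
      moreover have "ln (real K * u i * real T) = ln (real K) + ln (u i) + ln (real T)"
        using up Kr Tr by (simp add: ln_mult)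
      moreover have "ln (1 / real K) = - ln (real K)" using Kr by (simp add: ln_div)
      ultimately show "(u i * real K - 1) + (ln (1 / real K) - ln (u i)) \<le> (u i * real K - 1) + ln (real T)"
        by linarith
    qed
    also have "\<dots> = real K * ln (real T)"
    proof -
      have "(\<Sum>i<K. u i * real K - 1) = 0" using usum by (simp add: sum_subtractf sum_distrib_right[symmetric])
      thus ?thesis by (simp add: sum.distrib)
    qed
    finally show ?thesis .
  qed
  have "(\<Sum>t=1..T. exp_regret_round l \<eta> K t istar) = (\<Sum>n<T. exp_regret_round l \<eta> K (Suc n) istar)"
    using sum.atLeast1_atMost_eq[of "\<lambda>t. exp_regret_round l \<eta> K t istar" T] by simp
  also have "\<dots> = (\<Sum>n<T. R n) + (\<Sum>n<T. d n)"
    using regeq by (simp add: sum.distrib)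
  also have "(\<Sum>n<T. d n) \<le> (\<Sum>n<T. 2 / real T)" using dle by (intro sum_mono) auto
  also have "(\<Sum>n<T. 2 / real T) = 2" using Tr by simp
  also have "(\<Sum>n<T. R n) \<le> (real K * ln (real T) + real T * c) / \<eta>"
    using C D eta by (simp add: field_simps)
  also have "(real K * ln (real T) + real T * c) / \<eta> = real K * ln (real T) / \<eta> + 2 * \<eta> * real T / (1 - \<eta>)"
    unfolding c_def using eta by (simp add: field_simps power2_eq_square)
  finally show "(\<Sum>t=1..T. exp_regret_round l \<eta> K t istar)
              \<le> 2 + real K * ln (real T) / \<eta> + 2 * \<eta> * real T / (1 - \<eta>)" by simp
  qed
qed

end


theorem mainTheorem2:
  fixes l :: "nat \<Rightarrow> nat \<Rightarrow> real" and \<eta> :: real and K T :: nat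
  assumes "0 < \<eta>" and "\<eta> < 1" and "T \<ge> 1" and "K \<ge> 1"
    and "\<And>t i. 1 \<le> t \<Longrightarrow> t \<le> T \<Longrightarrow> i < K \<Longrightarrow> \<bar>l t i\<bar> \<le> 1"
  shows "(\<forall>h\<in>(\<Union>n<T. histories K n).
            (\<forall>i<K. lbprod l \<eta> K h i > 0) \<and> (\<Sum>i<K. lbprod l \<eta> K h i) = 1)
       \<and> (\<forall>istar<K. (\<Sum>t=1..T. exp_regret_round l \<eta> K t istar)
              \<le> 2 + real K * ln (real T) / \<eta> + 2 * \<eta> * real T / (1 - \<eta>))"
    using main_ctx[OF assms] .

end
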